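(* Let $\mathbb{H}$ be a real Hilbert space (of dimension at least $2$) and let $\mathbb{X},\mathbb{Y}$ be two-dimensional strictly convex smooth real Banach spaces. Let $T$ be a rank one operator either in $\mathbb{L}(\mathbb{H},\mathbb{Y})$ or in $\mathbb{L}(\mathbb{X},\mathbb{H})$, with $\|T\|=1$. If $x\in M_T$ is such that $(x,Tx)$ is not a CPP, then $T$ is an extreme contraction.
   Context: $M_T=\{x \text{ in the unit sphere of the domain}:\|Tx\|=\|T\|\}$. A norm one operator is an extreme contraction if it is an extreme point of the closed unit ball of the space of bounded linear operators between the given spaces. $B(x,r)=\{u:\|u-x\|<r\}$. $x\perp_B y$ means $\|x+\lambda y\|\ge\|x\|$ for all real $\lambda$; $x^\perp=\{y:x\perp_By\}$. For $x$ in the unit sphere $S_{\mathbb{U}}$ of $\mathbb{U}$ and $y\in S_{\mathbb{V}}$, $(x,y)$ is a CPP if there exist $r>0,\mu>0$ such that for all $z\in x^\perp\cap S_{\mathbb{U}}$, all $w\in y^\perp\cap S_{\mathbb{V}}$ and all $a,b\in\mathbb{R}$, $ax+bz\in B(x,r)\cap S_{\mathbb{U}}$ implies $\|ay+b\mu w\|\le1$. *)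

theory Defs
  imports "HOL-Analysis.Analysis"
begin

definition unit_sphere :: "'a::real_normed_vector set" where
  "unit_sphere = {x. norm x = 1}"

definition strictly_convex_space :: "'a::real_normed_vector itself \<Rightarrow> bool" where
  "strictly_convex_space _ \<longleftrightarrow>
     (\<forall>x y::'a. norm x = 1 \<longrightarrow> norm y = 1 \<longrightarrow> x \<noteq> y \<longrightarrow> norm ((1/2) *\<^sub>R (x + y)) < 1)"

definition smooth_space :: "'a::real_normed_vector itself \<Rightarrow> bool" where
  "smooth_space _ \<longleftrightarrow>
     (\<forall>x::'a. norm x = 1 \<longrightarrow> (\<exists>!f::'a \<Rightarrow>\<^sub>L real. norm f = 1 \<and> blinfun_apply f x = 1))"

definition norm_attainment_set :: "('a::real_normed_vector \<Rightarrow>\<^sub>L 'b::real_normed_vector) \<Rightarrow> 'a set" where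
  "norm_attainment_set T = {x. norm x = 1 \<and> norm (blinfun_apply T x) = norm T}"

definition birkhoff_orth :: "'a::real_normed_vector \<Rightarrow> 'a \<Rightarrow> bool" (infix "\<bottom>\<^sub>B" 50) where
  "x \<bottom>\<^sub>B y \<longleftrightarrow> (\<forall>l::real. norm (x + l *\<^sub>R y) \<ge> norm x)"

definition birkhoff_perp :: "'a::real_normed_vector \<Rightarrow> 'a set" where
  "birkhoff_perp x = {y. x \<bottom>\<^sub>B y}"

definition CPP :: "'a::real_normed_vector \<Rightarrow> 'b::real_normed_vector \<Rightarrow> bool" where
  "CPP x y \<longleftrightarrow> norm x = 1 \<and> norm y = 1 \<and>
     (\<exists>r>0. \<exists>\<mu>>0. \<forall>z \<in> birkhoff_perp x \<inter> unit_sphere. \<forall>w \<in> birkhoff_perp y \<inter> unit_sphere.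
        \<forall>a b::real. a *\<^sub>R x + b *\<^sub>R z \<in> ball x r \<inter> unit_sphere \<longrightarrow>
          norm (a *\<^sub>R y + (b * \<mu>) *\<^sub>R w) \<le> 1)"

definition extreme_contraction :: "('a::real_normed_vector \<Rightarrow>\<^sub>L 'b::real_normed_vector) \<Rightarrow> bool" where
  "extreme_contraction T \<longleftrightarrow> norm T = 1 \<and>
     (\<forall>A B t. norm A \<le> 1 \<longrightarrow> norm B \<le> 1 \<longrightarrow> 0 < t \<longrightarrow> t < (1::real) \<longrightarrow>
        T = t *\<^sub>R A + (1 - t) *\<^sub>R B \<longrightarrow> A = B)"

definition rank_one :: "('a::real_normed_vector \<Rightarrow>\<^sub>L 'b::real_normed_vector) \<Rightarrow> bool" where
  "rank_one T \<longleftrightarrow> dim (range (blinfun_apply T)) = 1"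

end

theory Submission
  imports Defs
begin


lemma indep_le_dim:
  fixes V :: "'a::real_vector set"
  assumes "dim V = n" "0 < n" "A \<subseteq> V" "independent A"
  shows "finite A \<and> card A \<le> n"
proof -
  obtain B where B: "B \<subseteq> V" "independent B" "V \<subseteq> span B" "card B = dim V"
    by (rule basis_exists)
  then have "finite B" using assms by (metis card.infinite less_irrefl)
  then show ?thesis using independent_span_bound[of B A] assms B by auto
qed

lemma span2:
  fixes a b :: "'a::real_normed_vector"
  assumes d: "dim (UNIV::'a set) = 2" and ind: "independent {a,b}" and ne: "a \<noteq> b"
  shows "\<exists>\<alpha> \<beta>. v = \<alpha> *\<^sub>R a + \<beta> *\<^sub>R b"
proof -
  have "v \<in> span {a,b}"
  proof (rule ccontr)
    assume "v \<notin> span {a,b}"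
    then have i3: "independent (insert v {a,b})" by (rule independent_insertI) (rule ind)
    have "v \<noteq> a" "v \<noteq> b" using \<open>v \<notin> span {a,b}\<close> by (auto intro: span_base)
    then have "card (insert v {a,b}) = 3" using ne by auto
    then show False using indep_le_dim[OF d _ _ i3] by auto
  qed
  then obtain k where "v - k *\<^sub>R a \<in> span {b}" by (auto simp: span_breakdown_eq)
  then obtain j where "v - k *\<^sub>R a = j *\<^sub>R b" by (auto simp: span_singleton)
  then show ?thesis by (metis add.commute diff_eq_eq)
qed

lemma coef_unique:
  fixes a b :: "'a::real_normed_vector"
  assumes ind: "independent {a,b}" and ne: "a \<noteq> b"
    and eq: "\<alpha> *\<^sub>R a + \<beta> *\<^sub>R b = \<alpha>' *\<^sub>R a + \<beta>' *\<^sub>R b"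
  shows "\<alpha> = \<alpha>' \<and> \<beta> = \<beta>'"
proof -
  have z: "(\<alpha> - \<alpha>') *\<^sub>R a + (\<beta> - \<beta>') *\<^sub>R b = 0" using eq by (simp add: algebra_simps)
  have ia: "a \<notin> span {b}" using ind ne
    by (auto simp: real_vector.independent_insert insert_commute)
  have ib: "b \<notin> span {a}" using ind ne
    by (metis insert_commute real_vector.independent_insert singleton_iff)
  show ?thesis
  proof (rule ccontr)
    assume "\<not> ?thesis"
    then consider "\<alpha> \<noteq> \<alpha>'" | "\<beta> \<noteq> \<beta>'" by blast
    then show False
    proof cases
      case 1
      have "(\<alpha> - \<alpha>') *\<^sub>R a = - ((\<beta> - \<beta>') *\<^sub>R b)" using z by (simp add: eq_neg_iff_add_eq_0)
      then have "a = inverse (\<alpha> - \<alpha>') *\<^sub>R (- ((\<beta> - \<beta>') *\<^sub>R b))" using 1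
        by (metis right_minus_eq scaleR_scaleR left_inverse scaleR_one)
      then show False using ia by (metis span_base span_scale span_neg singletonI)
    next
      case 2
      have "(\<beta> - \<beta>') *\<^sub>R b = - ((\<alpha> - \<alpha>') *\<^sub>R a)" using z by (simp add: eq_neg_iff_add_eq_0 add.commute)
      then have "b = inverse (\<beta> - \<beta>') *\<^sub>R (- ((\<alpha> - \<alpha>') *\<^sub>R a))" using 2
        by (metis right_minus_eq scaleR_scaleR left_inverse scaleR_one)
      then show False using ib by (metis span_base span_scale span_neg singletonI)
    qed
  qed
qed

lemma birk_bound:
  fixes y w :: "'a::real_normed_vector"
  assumes "norm y = 1" "y \<bottom>\<^sub>B w"
  shows "\<bar>g\<bar> \<le> norm (g *\<^sub>R y + d *\<^sub>R w)"
proof (cases "g = 0")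
  case True then show ?thesis by simp
next
  case False
  have "norm (y + (d/g) *\<^sub>R w) \<ge> 1" using assms unfolding birkhoff_orth_def by metis
  moreover have "g *\<^sub>R y + d *\<^sub>R w = g *\<^sub>R (y + (d/g) *\<^sub>R w)" using False
    by (simp add: scaleR_add_right)
  ultimately show ?thesis by (simp add: mult_le_cancel_left1)
qed

lemma birk_indep:
  fixes y w :: "'a::real_normed_vector"
  assumes "norm y = 1" "norm w = 1" "y \<bottom>\<^sub>B w"
  shows "independent {y,w} \<and> y \<noteq> w"
proof -
  have nsp: "y \<notin> span {w}"
  proof
    assume "y \<in> span {w}"
    then obtain k where k: "y = k *\<^sub>R w" by (auto simp: span_singleton)
    have "norm (y + (-k) *\<^sub>R w) \<ge> norm y" using assms(3) unfolding birkhoff_orth_def by blast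
    then show False using k assms by simp
  qed
  have "w \<noteq> 0" using assms by auto
  then have "independent {w}" by simp
  then have "independent {y,w}" using nsp by (simp add: independent_insertI)
  moreover have "y \<noteq> w" using nsp by (auto intro: span_base)
  ultimately show ?thesis by blast
qed

lemma circle_pick:
  fixes \<alpha> :: real
  assumes "\<alpha> \<noteq> 0"
  shows "\<exists>a b. a\<^sup>2 + b\<^sup>2 = 1 \<and> a + b * \<alpha> > 1"
proof -
  define s where "s = sqrt (1 + \<alpha>\<^sup>2)"
  have s0: "s > 0" unfolding s_def by (simp add: add_pos_nonneg)
  have ss: "s\<^sup>2 = 1 + \<alpha>\<^sup>2" unfolding s_def by simp
  have "s > 1" unfolding s_def using assms by (simp add: real_less_rsqrt)
  have "(1/s)\<^sup>2 + (\<alpha>/s)\<^sup>2 = 1" using s0 ss by (simp add: power_divide add_divide_distrib[symmetric]) (metis add_pos_nonneg zero_le_power2 zero_less_one less_irrefl)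
  moreover have "1/s + (\<alpha>/s) * \<alpha> = s" using s0 ss by (simp add: field_simps power2_eq_square)
  ultimately show ?thesis using \<open>s > 1\<close> by metis
qed

lemma ykey:
  fixes y0 v w :: "'y::real_normed_vector"
  assumes d: "dim (UNIV::'y set) = 2" and n: "norm y0 = 1"
    and c: "\<forall>a b. a\<^sup>2 + b\<^sup>2 = 1 \<longrightarrow> norm (a *\<^sub>R y0 + b *\<^sub>R v) \<le> 1"
    and o: "y0 \<bottom>\<^sub>B w" and nw: "norm w = 1"
  shows "\<exists>\<beta>. v = \<beta> *\<^sub>R w"
proof -
  have iw: "independent {y0,w}" "y0 \<noteq> w" using birk_indep[OF n nw o] by auto
  obtain \<alpha> \<beta> where v: "v = \<alpha> *\<^sub>R y0 + \<beta> *\<^sub>R w" using span2[OF d iw] by blast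
  have "\<alpha> = 0"
  proof (rule ccontr)
    assume "\<alpha> \<noteq> 0"
    then obtain a b where ab: "a\<^sup>2 + b\<^sup>2 = 1" "a + b * \<alpha> > 1" using circle_pick by blast
    have "a *\<^sub>R y0 + b *\<^sub>R v = (a + b * \<alpha>) *\<^sub>R y0 + (b * \<beta>) *\<^sub>R w"
      unfolding v by (simp add: algebra_simps)
    then have "\<bar>a + b * \<alpha>\<bar> \<le> norm (a *\<^sub>R y0 + b *\<^sub>R v)" using birk_bound[OF n o] by metis
    then show False using c ab by force
  qed
  then show ?thesis using v by auto
qed

lemma convex_comb_norm:
  fixes A B :: "'a::real_normed_vector"
  assumes "norm A \<le> 1" "norm B \<le> 1" "0 \<le> p" "0 \<le> q" "p + q = 1"
  shows "norm (p *\<^sub>R A + q *\<^sub>R B) \<le> 1"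
proof -
  have "norm (p *\<^sub>R A + q *\<^sub>R B) \<le> p * norm A + q * norm B"
    using norm_triangle_ineq[of "p *\<^sub>R A" "q *\<^sub>R B"] assms by simp
  also have "\<dots> \<le> p + q" using assms by (intro add_mono) (simp_all add: mult_left_le)
  finally show ?thesis using assms by simp
qed

lemma perturb:
  fixes T A B :: "'a::real_normed_vector"
  assumes "norm A \<le> 1" "norm B \<le> 1" "0 < t" "t < 1" "T = t *\<^sub>R A + (1 - t) *\<^sub>R B" "A \<noteq> B"
  shows "\<exists>D. D \<noteq> 0 \<and> norm (T + D) \<le> 1 \<and> norm (T - D) \<le> 1"
proof -
  define s where "s = min t (1 - t)"
  have s: "0 < s" "s \<le> t" "s \<le> 1 - t" using assms unfolding s_def by auto
  define D where "D = s *\<^sub>R (A - B)"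
  have "D \<noteq> 0" using s assms unfolding D_def by simp
  moreover have "T + D = (t + s) *\<^sub>R A + (1 - t - s) *\<^sub>R B"
    unfolding D_def assms(5) by (simp add: algebra_simps)
  then have "norm (T + D) \<le> 1" using convex_comb_norm[OF assms(1,2)] s by simp
  moreover have "T - D = (t - s) *\<^sub>R A + (1 - t + s) *\<^sub>R B"
    unfolding D_def assms(5) by (simp add: algebra_simps)
  then have "norm (T - D) \<le> 1" using convex_comb_norm[OF assms(1,2)] s by simp
  ultimately show ?thesis by blast
qed

lemma sc_zero:
  fixes y0 d :: "'y::real_normed_vector"
  assumes sc: "strictly_convex_space TYPE('y)" and n: "norm y0 = 1"
    and p: "norm (y0 + d) \<le> 1" and m: "norm (y0 - d) \<le> 1"
  shows "d = 0"
proof (rule ccontr)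
  assume d: "d \<noteq> 0"
  have "(y0 + d) + (y0 - d) = 2 *\<^sub>R y0" by (simp add: scaleR_2)
  then have "2 = norm ((y0 + d) + (y0 - d))" using n by simp
  also have "\<dots> \<le> norm (y0 + d) + norm (y0 - d)" by (rule norm_triangle_ineq)
  finally have "norm (y0 + d) = 1" "norm (y0 - d) = 1" using p m by auto
  moreover have "y0 + d \<noteq> y0 - d" using d by (simp add: eq_neg_iff_add_eq_0 flip: scaleR_2)
  ultimately have "norm ((1/2) *\<^sub>R ((y0 + d) + (y0 - d))) < 1"
    using sc unfolding strictly_convex_space_def by blast
  then show False using n by simp
qed

lemma hil_sq:
  fixes x z :: "'h::real_inner"
  shows "(norm (a *\<^sub>R x + b *\<^sub>R z))\<^sup>2 = a\<^sup>2 * (norm x)\<^sup>2 + 2 * a * b * (x \<bullet> z) + b\<^sup>2 * (norm z)\<^sup>2"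
  unfolding power2_norm_eq_inner
  by (simp add: inner_add_left inner_add_right inner_commute algebra_simps power2_eq_square)

lemma hil_birk:
  fixes x z :: "'h::real_inner"
  assumes "x \<bottom>\<^sub>B z"
  shows "x \<bullet> z = 0"
proof (rule ccontr)
  assume c: "x \<bullet> z \<noteq> 0"
  then have z: "z \<noteq> 0" by auto
  define l where "l = - (x \<bullet> z) / (norm z)\<^sup>2"
  have "norm (x + l *\<^sub>R z) \<ge> norm x" using assms unfolding birkhoff_orth_def by blast
  then have "(norm (x + l *\<^sub>R z))\<^sup>2 \<ge> (norm x)\<^sup>2" by (simp add: power_mono)
  moreover have "(norm (x + l *\<^sub>R z))\<^sup>2 = (norm x)\<^sup>2 - (x \<bullet> z)\<^sup>2 / (norm z)\<^sup>2"
    using hil_sq[of 1 x l z] z unfolding l_def by (simp add: field_simps power2_eq_square)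
  moreover have "(x \<bullet> z)\<^sup>2 / (norm z)\<^sup>2 > 0" using c z by simp
  ultimately show False by linarith
qed

lemma sq1_norm: "(norm (v::'a::real_normed_vector))\<^sup>2 = 1 \<Longrightarrow> norm v = 1"
  using norm_ge_zero[of v] power2_eq_1_iff[of "norm v"] by linarith

lemma hil_unit:
  fixes x z :: "'h::real_inner"
  assumes "norm x = 1" "norm z = 1" "x \<bullet> z = 0" "a\<^sup>2 + b\<^sup>2 = 1"
  shows "norm (a *\<^sub>R x + b *\<^sub>R z) = 1"
  using hil_sq[of a x b z] assms by (intro sq1_norm) simp

lemma hil_unit_conv:
  fixes x z :: "'h::real_inner"
  assumes "norm x = 1" "norm z = 1" "x \<bullet> z = 0" "norm (a *\<^sub>R x + b *\<^sub>R z) = 1"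
  shows "a\<^sup>2 + b\<^sup>2 = 1"
  using hil_sq[of a x b z] assms by simp

lemma cpp_from_v:
  fixes y0 v :: "'y::real_normed_vector"
  assumes d: "dim (UNIV::'y set) = 2" and n: "norm y0 = 1"
    and c: "\<forall>a b. a\<^sup>2 + b\<^sup>2 = 1 \<longrightarrow> norm (a *\<^sub>R y0 + b *\<^sub>R v) \<le> 1"
    and o: "y0 \<bottom>\<^sub>B w" and nw: "norm w = 1" and ab: "a\<^sup>2 + b\<^sup>2 = 1"
  shows "norm (a *\<^sub>R y0 + (b * norm v) *\<^sub>R w) \<le> 1"
proof -
  obtain \<beta> where v: "v = \<beta> *\<^sub>R w" using ykey[OF d n c o nw] by blast
  have nv: "norm v = \<bar>\<beta>\<bar>" using v nw by simp
  show ?thesis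
  proof (cases "\<beta> \<ge> 0")
    case True
    then have "(b * norm v) *\<^sub>R w = b *\<^sub>R v" using v nv by simp
    then show ?thesis using c ab by simp
  next
    case False
    then have "(b * norm v) *\<^sub>R w = (-b) *\<^sub>R v" using v nv by simp
    moreover have "a\<^sup>2 + (-b)\<^sup>2 = 1" using ab by simp
    ultimately show ?thesis using c by metis
  qed
qed

lemma case1:
  fixes T :: "'h::real_inner \<Rightarrow>\<^sub>L 'y::real_normed_vector"
  assumes d: "dim (UNIV::'y set) = 2" and sc: "strictly_convex_space TYPE('y)"
    and nT: "norm T = 1" and xM: "x \<in> norm_attainment_set T" and ncpp: "\<not> CPP x (blinfun_apply T x)"
  shows "extreme_contraction T"
  unfolding extreme_contraction_def
proof (intro conjI nT allI impI)
  fix A B :: "'h \<Rightarrow>\<^sub>L 'y" and t :: real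
  assume h: "norm A \<le> 1" "norm B \<le> 1" "0 < t" "t < 1" "T = t *\<^sub>R A + (1 - t) *\<^sub>R B"
  show "A = B"
  proof (rule ccontr)
    assume "A \<noteq> B"
    then obtain D where D: "D \<noteq> 0" "norm (T + D) \<le> 1" "norm (T - D) \<le> 1"
      using perturb[OF h] by blast
    define y0 where "y0 = blinfun_apply T x"
    have nx: "norm x = 1" and ny: "norm y0 = 1" using xM nT unfolding norm_attainment_set_def y0_def by auto
    have "norm (y0 + D x) \<le> 1"
      using norm_blinfun[of "T + D" x] D nx unfolding y0_def by (simp add: blinfun.add_left)
    moreover have "norm (y0 - D x) \<le> 1"
      using norm_blinfun[of "T - D" x] D nx unfolding y0_def by (simp add: blinfun.diff_left)
    ultimately have Dx: "D x = 0" using sc_zero[OF sc ny] by blast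
    obtain u where u: "D u \<noteq> 0" using D(1) by (metis blinfun_eqI zero_blinfun.rep_eq)
    define u' where "u' = u - (u \<bullet> x) *\<^sub>R x"
    have Du': "D u' = D u" unfolding u'_def by (simp add: blinfun.diff_right blinfun.scaleR_right Dx)
    then have u'0: "u' \<noteq> 0" using u by auto
    have xx: "x \<bullet> x = 1" using nx by (simp add: dot_square_norm)
    define u1 where "u1 = (1 / norm u') *\<^sub>R u'"
    have nu1: "norm u1 = 1" unfolding u1_def using u'0 by simp
    have ox: "x \<bullet> u1 = 0" unfolding u1_def u'_def
      by (simp add: inner_diff_right inner_commute xx)
    have Du1: "D u1 \<noteq> 0" unfolding u1_def using u'0 Du' u by (simp add: blinfun.scaleR_right)
    have circ: "norm (a *\<^sub>R y0 + b *\<^sub>R (T u1 + s *\<^sub>R D u1)) \<le> 1"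
      if ab: "a\<^sup>2 + b\<^sup>2 = 1" and s: "s = 1 \<or> s = -1" for a b s
    proof -
      have p1: "norm (a *\<^sub>R x + b *\<^sub>R u1) = 1" using hil_unit[OF nx nu1 ox ab] .
      have "blinfun_apply (T + s *\<^sub>R D) (a *\<^sub>R x + b *\<^sub>R u1) = a *\<^sub>R y0 + b *\<^sub>R (T u1 + s *\<^sub>R D u1)"
        unfolding y0_def by (simp add: blinfun.add_left blinfun.scaleR_left blinfun.add_right
            blinfun.scaleR_right Dx algebra_simps)
      moreover have "norm (T + s *\<^sub>R D) \<le> 1" using s D by auto
      ultimately show ?thesis
        using norm_blinfun[of "T + s *\<^sub>R D" "a *\<^sub>R x + b *\<^sub>R u1"] p1 by simp
    qed
    obtain v where v: "v \<noteq> 0" "\<forall>a b. a\<^sup>2 + b\<^sup>2 = 1 \<longrightarrow> norm (a *\<^sub>R y0 + b *\<^sub>R v) \<le> 1"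
    proof (cases "T u1 + D u1 = 0")
      case True
      then have "T u1 = - D u1" by (simp add: eq_neg_iff_add_eq_0)
      then have "T u1 + (-1) *\<^sub>R D u1 = - (2 *\<^sub>R D u1)" by (simp add: scaleR_2)
      then have "T u1 + (-1) *\<^sub>R D u1 \<noteq> 0" using Du1 by simp
      then show ?thesis using that circ by blast
    next
      case False
      then show ?thesis using that circ[of _ _ 1] by auto
    qed
    have "CPP x y0"
      unfolding CPP_def
    proof (intro conjI nx ny)
      have nv: "0 < norm v" using v by simp
      show "\<exists>r>0. \<exists>\<mu>>0. \<forall>z\<in>birkhoff_perp x \<inter> unit_sphere. \<forall>w\<in>birkhoff_perp y0 \<inter> unit_sphere.
        \<forall>a b. a *\<^sub>R x + b *\<^sub>R z \<in> ball x r \<inter> unit_sphere \<longrightarrow> norm (a *\<^sub>R y0 + (b * \<mu>) *\<^sub>R w) \<le> 1"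
      proof (rule exI[of _ 1], intro conjI zero_less_one exI[of _ "norm v"] nv ballI allI impI)
      fix z w a b
      assume z: "z \<in> birkhoff_perp x \<inter> unit_sphere" and w: "w \<in> birkhoff_perp y0 \<inter> unit_sphere"
        and p: "a *\<^sub>R x + b *\<^sub>R z \<in> ball x 1 \<inter> unit_sphere"
      have xz: "x \<bullet> z = 0" using z hil_birk unfolding birkhoff_perp_def by blast
      have ab: "a\<^sup>2 + b\<^sup>2 = 1" using hil_unit_conv[OF nx _ xz] z p by (auto simp: unit_sphere_def)
      show "norm (a *\<^sub>R y0 + (b * norm v) *\<^sub>R w) \<le> 1"
        using cpp_from_v[OF d ny v(2) _ _ ab] w by (auto simp: unit_sphere_def birkhoff_perp_def)
    qed
    qed
    then show False using ncpp unfolding y0_def by simp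
  qed
qed

lemma smooth_zero:
  fixes x z :: "'x::real_normed_vector" and g :: "'x \<Rightarrow>\<^sub>L real"
  assumes d: "dim (UNIV::'x set) = 2" and sm: "smooth_space TYPE('x)"
    and nx: "norm x = 1" and nz: "norm z = 1" and o: "x \<bottom>\<^sub>B z"
    and ng: "norm g = 1" and gx: "blinfun_apply g x = 1"
  shows "blinfun_apply g z = 0"
proof -
  have iw: "independent {x,z}" "x \<noteq> z" using birk_indep[OF nx nz o] by auto
  define cf where "cf v = (THE \<alpha>. \<exists>\<beta>. v = \<alpha> *\<^sub>R x + \<beta> *\<^sub>R z)" for v
  have cfe: "cf (\<alpha> *\<^sub>R x + \<beta> *\<^sub>R z) = \<alpha>" for \<alpha> \<beta>
    unfolding cf_def
    by (rule the_equality) (auto dest: coef_unique[OF iw])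
  have rep: "\<exists>\<alpha> \<beta>. v = \<alpha> *\<^sub>R x + \<beta> *\<^sub>R z" for v using span2[OF d iw] .
  have cfb: "norm (cf u) \<le> norm u" for u
  proof -
    obtain a1 b1 where u: "u = a1 *\<^sub>R x + b1 *\<^sub>R z" using rep by blast
    show ?thesis unfolding u cfe using birk_bound[OF nx o] by simp
  qed
  have bl: "bounded_linear cf"
  proof (rule bounded_linear_intro[where K=1])
    fix u v
    obtain a1 b1 where u: "u = a1 *\<^sub>R x + b1 *\<^sub>R z" using rep by blast
    obtain a2 b2 where v: "v = a2 *\<^sub>R x + b2 *\<^sub>R z" using rep by blast
    have "u + v = (a1 + a2) *\<^sub>R x + (b1 + b2) *\<^sub>R z" unfolding u v by (simp add: algebra_simps)
    then show "cf (u + v) = cf u + cf v" unfolding u v by (simp add: cfe)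
  next
    fix r and u :: 'x
    obtain a1 b1 where u: "u = a1 *\<^sub>R x + b1 *\<^sub>R z" using rep by blast
    have "r *\<^sub>R u = (r * a1) *\<^sub>R x + (r * b1) *\<^sub>R z" unfolding u by (simp add: algebra_simps)
    then show "cf (r *\<^sub>R u) = r *\<^sub>R cf u" unfolding u by (simp add: cfe)
  next
    fix u :: 'x
    show "norm (cf u) \<le> norm u * 1" using cfb by simp
  qed
  define f where "f = Blinfun cf"
  have fa: "blinfun_apply f = cf" unfolding f_def using bl by (simp add: bounded_linear_Blinfun_apply)
  have cfx: "cf x = 1" using cfe[of 1 0] by simp
  have cfz: "cf z = 0" using cfe[of 0 1] by simp
  have "norm f \<le> 1"
    by (rule norm_blinfun_bound) (use cfb in \<open>simp_all add: fa\<close>)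
  moreover have "1 \<le> norm f" using norm_blinfun[of f x] nx fa cfx by simp
  ultimately have nf: "norm f = 1" by simp
  have "norm g \<le> 1" using ng by simp
  have "\<exists>!k::'x \<Rightarrow>\<^sub>L real. norm k = 1 \<and> blinfun_apply k x = 1"
    using sm nx unfolding smooth_space_def by blast
  then have "g = f" using nf ng gx fa cfx by blast
  then show ?thesis using fa cfz by simp
qed

lemma hil_zero:
  fixes y0 d :: "'h::real_inner"
  assumes n: "norm y0 = 1" and p: "norm (y0 + d) \<le> 1" and m: "norm (y0 - d) \<le> 1"
  shows "d = 0"
proof -
  have "(norm (y0 + d))\<^sup>2 \<le> 1" "(norm (y0 - d))\<^sup>2 \<le> 1" using p m by (simp_all add: power_le_one)
  moreover have "(norm (y0 + d))\<^sup>2 = 1 + 2 * (y0 \<bullet> d) + (norm d)\<^sup>2"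
    using hil_sq[of 1 y0 1 d] n by simp
  moreover have "(norm (y0 - d))\<^sup>2 = 1 - 2 * (y0 \<bullet> d) + (norm d)\<^sup>2"
    using hil_sq[of 1 y0 "-1" d] n by simp
  ultimately have "(norm d)\<^sup>2 \<le> 0" by linarith
  then show ?thesis by simp
qed

lemma rank_one_rep:
  fixes T :: "'x::real_normed_vector \<Rightarrow>\<^sub>L 'h::real_inner"
  assumes r: "rank_one T" and y0: "y0 = blinfun_apply T x" and n: "norm y0 = 1"
  shows "blinfun_apply T u = (blinfun_apply T u \<bullet> y0) *\<^sub>R y0"
proof -
  have "blinfun_apply T u \<in> span {y0}"
  proof (rule ccontr)
    assume nin: "blinfun_apply T u \<notin> span {y0}"
    have "y0 \<noteq> 0" using n by auto
    then have i2: "independent (insert (blinfun_apply T u) {y0})"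
      using nin by (rule_tac independent_insertI) simp_all
    have "blinfun_apply T u \<noteq> y0" using nin by (auto intro: span_base)
    have sub: "insert (blinfun_apply T u) {y0} \<subseteq> range (blinfun_apply T)" using y0 by auto
    have dd: "dim (range (blinfun_apply T)) = 1" using r unfolding rank_one_def .
    have "card (insert (blinfun_apply T u) {y0}) \<le> 1"
      using indep_le_dim[OF dd _ sub i2] by simp
    then show False using \<open>blinfun_apply T u \<noteq> y0\<close> by simp
  qed
  then obtain k where k: "blinfun_apply T u = k *\<^sub>R y0" by (auto simp: span_singleton)
  have "y0 \<bullet> y0 = 1" using n by (simp add: dot_square_norm)
  then show ?thesis using k by simp
qed

lemma case2:
  fixes T :: "'x::real_normed_vector \<Rightarrow>\<^sub>L 'h::real_inner"
  assumes d: "dim (UNIV::'x set) = 2" and sm: "smooth_space TYPE('x)" and r: "rank_one T"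
    and nT: "norm T = 1" and xM: "x \<in> norm_attainment_set T" and ncpp: "\<not> CPP x (blinfun_apply T x)"
  shows "extreme_contraction T"
  unfolding extreme_contraction_def
proof (intro conjI nT allI impI)
  fix A B :: "'x \<Rightarrow>\<^sub>L 'h" and t :: real
  assume h: "norm A \<le> 1" "norm B \<le> 1" "0 < t" "t < 1" "T = t *\<^sub>R A + (1 - t) *\<^sub>R B"
  show "A = B"
  proof (rule ccontr)
    assume "A \<noteq> B"
    then obtain D where D: "D \<noteq> 0" "norm (T + D) \<le> 1" "norm (T - D) \<le> 1"
      using perturb[OF h] by blast
    define y0 where "y0 = blinfun_apply T x"
    have nx: "norm x = 1" and ny: "norm y0 = 1" using xM nT unfolding norm_attainment_set_def y0_def by auto
    have "norm (y0 + D x) \<le> 1"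
      using norm_blinfun[of "T + D" x] D nx unfolding y0_def by (simp add: blinfun.add_left)
    moreover have "norm (y0 - D x) \<le> 1"
      using norm_blinfun[of "T - D" x] D nx unfolding y0_def by (simp add: blinfun.diff_left)
    ultimately have Dx: "D x = 0" using hil_zero[OF ny] by blast
    have Trep: "T u = (T u \<bullet> y0) *\<^sub>R y0" for u using rank_one_rep[OF r y0_def ny] .
    have blp: "bounded_linear (\<lambda>u. T u \<bullet> y0)"
      by (intro bounded_linear_compose[OF bounded_linear_inner_left] blinfun.bounded_linear_right)
    define phi where "phi = Blinfun (\<lambda>u. T u \<bullet> y0)"
    have pa: "blinfun_apply phi u = T u \<bullet> y0" for u
      unfolding phi_def using blp by (simp add: bounded_linear_Blinfun_apply)
    have yy: "y0 \<bullet> y0 = 1" using ny by (simp add: dot_square_norm)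
    have px: "blinfun_apply phi x = 1" using pa yy unfolding y0_def by simp
    have "norm phi \<le> 1"
    proof (rule norm_blinfun_bound)
      fix u
      have "\<bar>T u \<bullet> y0\<bar> \<le> norm (T u) * norm y0" by (rule Cauchy_Schwarz_ineq2)
      also have "\<dots> \<le> norm u" using norm_blinfun[of T u] nT ny by simp
      finally show "norm (blinfun_apply phi u) \<le> 1 * norm u" using pa by simp
    qed simp
    moreover have "1 \<le> norm phi" using norm_blinfun[of phi x] nx px by simp
    ultimately have nphi: "norm phi = 1" by simp
    have pz: "T z \<bullet> y0 = 0" if "x \<bottom>\<^sub>B z" "norm z = 1" for z
      using smooth_zero[OF d sm nx that(2) that(1) nphi px] pa by simp
    have "CPP x y0"
    proof (cases "\<exists>z0. z0 \<in> birkhoff_perp x \<inter> unit_sphere")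
      case False
      then show ?thesis unfolding CPP_def using nx ny zero_less_one by blast
    next
      case True
      then obtain z0 where z0: "x \<bottom>\<^sub>B z0" "norm z0 = 1"
        by (auto simp: birkhoff_perp_def unit_sphere_def)
      have iz: "independent {x,z0}" "x \<noteq> z0" using birk_indep[OF nx z0(2,1)] by auto
      have Dz0: "D z0 \<noteq> 0"
      proof
        assume Dz: "D z0 = 0"
        have "D = 0"
        proof (rule blinfun_eqI)
          fix v
          obtain a b where "v = a *\<^sub>R x + b *\<^sub>R z0" using span2[OF d iz] by blast
          then show "D v = blinfun_apply 0 v" by (simp add: blinfun.add_right blinfun.scaleR_right Dx Dz)
        qed
        then show False using D by simp
      qed
      define \<mu> where "\<mu> = norm (D z0)"
      have mu: "\<mu> > 0" using Dz0 unfolding \<mu>_def by simp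
      have Dz: "norm (D z) = \<mu>" if "x \<bottom>\<^sub>B z" "norm z = 1" for z
      proof -
        obtain a b where zab: "z = a *\<^sub>R x + b *\<^sub>R z0" using span2[OF d iz] by blast
        have "T z \<bullet> y0 = a"
          using pz[OF z0] yy unfolding zab y0_def by (simp add: blinfun.add_right blinfun.scaleR_right inner_add_left)
        then have "a = 0" using pz[OF that] by simp
        then have "z = b *\<^sub>R z0" using zab by simp
        then have "\<bar>b\<bar> = 1" "D z = b *\<^sub>R D z0" using that z0 by (simp_all add: blinfun.scaleR_right)
        then show ?thesis unfolding \<mu>_def by simp
      qed
      show ?thesis
        unfolding CPP_def
      proof (intro conjI nx ny)
        show "\<exists>r>0. \<exists>\<mu>>0. \<forall>z\<in>birkhoff_perp x \<inter> unit_sphere. \<forall>w\<in>birkhoff_perp y0 \<inter> unit_sphere.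
          \<forall>a b. a *\<^sub>R x + b *\<^sub>R z \<in> ball x r \<inter> unit_sphere \<longrightarrow> norm (a *\<^sub>R y0 + (b * \<mu>) *\<^sub>R w) \<le> 1"
        proof (rule exI[of _ 1], intro conjI zero_less_one exI[of _ \<mu>] mu ballI allI impI)
          fix z w a b
          assume z: "z \<in> birkhoff_perp x \<inter> unit_sphere" and w: "w \<in> birkhoff_perp y0 \<inter> unit_sphere"
            and p: "a *\<^sub>R x + b *\<^sub>R z \<in> ball x 1 \<inter> unit_sphere"
          have zo: "x \<bottom>\<^sub>B z" "norm z = 1" using z by (auto simp: birkhoff_perp_def unit_sphere_def)
          have np: "norm (a *\<^sub>R x + b *\<^sub>R z) = 1" using p by (auto simp: unit_sphere_def)
          have Tz: "T z = 0" using Trep[of z] pz[OF zo] by simp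
          have Tp: "T (a *\<^sub>R x + b *\<^sub>R z) = a *\<^sub>R y0"
            unfolding y0_def by (simp add: blinfun.add_right blinfun.scaleR_right Tz)
          have Dp: "D (a *\<^sub>R x + b *\<^sub>R z) = b *\<^sub>R D z"
            by (simp add: blinfun.add_right blinfun.scaleR_right Dx)
          have "norm (a *\<^sub>R y0 + b *\<^sub>R D z) \<le> 1"
            using norm_blinfun[of "T + D" "a *\<^sub>R x + b *\<^sub>R z"] D np Tp Dp by (simp add: blinfun.add_left)
          then have s1: "(norm (a *\<^sub>R y0 + b *\<^sub>R D z))\<^sup>2 \<le> 1" by (simp add: power_le_one)
          have "norm (a *\<^sub>R y0 + (-b) *\<^sub>R D z) \<le> 1"
            using norm_blinfun[of "T - D" "a *\<^sub>R x + b *\<^sub>R z"] D np Tp Dp by (simp add: blinfun.diff_left)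
          then have s2: "(norm (a *\<^sub>R y0 + (-b) *\<^sub>R D z))\<^sup>2 \<le> 1" by (simp add: power_le_one)
          have "a\<^sup>2 + b\<^sup>2 * \<mu>\<^sup>2 \<le> 1"
            using s1 s2 hil_sq[of a y0 b "D z"] hil_sq[of a y0 "-b" "D z"] ny Dz[OF zo] by simp
          moreover have "y0 \<bullet> w = 0" using w hil_birk by (auto simp: birkhoff_perp_def)
          moreover have "norm w = 1" using w by (auto simp: unit_sphere_def)
          ultimately have "(norm (a *\<^sub>R y0 + (b * \<mu>) *\<^sub>R w))\<^sup>2 \<le> 1"
            using hil_sq[of a y0 "b * \<mu>" w] ny by (simp add: power_mult_distrib)
          then show "norm (a *\<^sub>R y0 + (b * \<mu>) *\<^sub>R w) \<le> 1"
            by (simp add: power_le_one_iff)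
        qed
      qed
    qed
    then show False using ncpp unfolding y0_def by simp
  qed
qed

theorem mainTheorem6:
  assumes H_dim: "\<exists>u v::'h::{real_inner, complete_space}. independent {u, v} \<and> u \<noteq> v"
    and X_dim: "dim (UNIV :: 'x::banach set) = 2"
    and X_sc: "strictly_convex_space TYPE('x)"
    and X_sm: "smooth_space TYPE('x)"
    and Y_dim: "dim (UNIV :: 'y::banach set) = 2"
    and Y_sc: "strictly_convex_space TYPE('y)"
    and Y_sm: "smooth_space TYPE('y)"
  shows "(\<forall>(T::'h \<Rightarrow>\<^sub>L 'y) x. rank_one T \<and> norm T = 1 \<and> x \<in> norm_attainment_set T \<and> \<not> CPP x (blinfun_apply T x)
            \<longrightarrow> extreme_contraction T)
       \<and> (\<forall>(T::'x \<Rightarrow>\<^sub>L 'h) x. rank_one T \<and> norm T = 1 \<and> x \<in> norm_attainment_set T \<and> \<not> CPP x (blinfun_apply T x)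
            \<longrightarrow> extreme_contraction T)"
    using case1[OF Y_dim Y_sc] case2[OF X_dim X_sm] by blast

end
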